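(* Let $p\ge1$ and let $u,v\in E_1$ be such that $\Gamma^p_u$ is isomorphic to $\Gamma^p_v$ (as unrooted graphs). Then the sequences $\mathcal L^u$ and $\mathcal L^v$ are compatible.
   Context: $X=\{0,\dots,p\}$; $\mathcal G_{S_p}$ is generated by $e_1,\dots,e_p$ acting on $X^\infty$ by $e_i(0w)=i\,e_i(w)$, $e_i(iw)=0w$, $e_i(jw)=jw$ for $j\notin\{0,i\}$; $\Gamma^p_u$ is the Schreier graph on the orbit of $u$ (edges $x$—$e_i(x)$). $E_1$ is the set of $w\in X^\infty$ with $\Gamma^p_w$ one-ended; every $w\in E_1$ has an infinite decomposition $w=0^ka_1u_1a_2u_2\cdots$ with $k\ge0$, $a_j\in\{1,\dots,p\}$, $a_{j+1}\ne a_j$, $u_j\in\{0,a_j\}^\ast$ finite. With $N_j=k+j+\sum_{\ell\le j}|u_\ell|$, the path of cycles of $w$ consists of the $e_{a_j}$-cycles with vertex sets $\{0,a_j\}^{N_j}a_{j+1}u_{j+1}a_{j+2}u_{j+2}\cdots$, and $\mathcal L^w=(2^{N_j})_{j\ge1}$ is the sequence of their lengths. Two integer sequences $(x_i),(y_i)$ are compatible if there exist $l,h\in\mathbb N$ with $x_{l+n}=y_{h+n}$ for all $n\in\mathbb N$. *)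

theory Defs
  imports Main
begin

text \<open>Infinite words over X = {0,...,p} are functions nat => nat with values at most p.\<close>

definition Xinf :: "nat \<Rightarrow> (nat \<Rightarrow> nat) set" where
  "Xinf p = {w. \<forall>n. w n \<le> p}"

text \<open>The generator e_i: e_i(0w) = i e_i(w), e_i(iw) = 0w, e_i(jw) = jw otherwise.
  Unfolded: position n is changed iff all earlier letters are 0; there 0 becomes i and i becomes 0.\<close>

definition gen :: "nat \<Rightarrow> (nat \<Rightarrow> nat) \<Rightarrow> (nat \<Rightarrow> nat)" where
  "gen i w n = (if (\<forall>m<n. w m = 0)
                then (if w n = 0 then i else if w n = i then 0 else w n)
                else w n)"

definition sadj :: "nat \<Rightarrow> (nat \<Rightarrow> nat) \<Rightarrow> (nat \<Rightarrow> nat) \<Rightarrow> bool" where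
  "sadj p x y \<longleftrightarrow> (\<exists>i\<in>{1..p}. y = gen i x \<or> x = gen i y)"

text \<open>Vertex set of the Schreier graph Gamma^p_u: the orbit of u under the group generated
  by e_1,...,e_p (each e_i is a bijection of X^infinity, so this is the set reachable by edges).\<close>

definition orbit :: "nat \<Rightarrow> (nat \<Rightarrow> nat) \<Rightarrow> (nat \<Rightarrow> nat) set" where
  "orbit p u = {y. (sadj p)\<^sup>*\<^sup>* u y}"

text \<open>Number of edges between x and y in the Schreier graph (as a multigraph with loops):
  edges are the pairs (z,i) with i in {1..p}, joining z and e_i(z).\<close>

definition mult :: "nat \<Rightarrow> (nat \<Rightarrow> nat) \<Rightarrow> (nat \<Rightarrow> nat) \<Rightarrow> nat" where
  "mult p x y = card {(z, i). z \<in> {x, y} \<and> i \<in> {1..p} \<and> {z, gen i z} = {x, y}}"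

definition schreier_iso :: "nat \<Rightarrow> (nat \<Rightarrow> nat) \<Rightarrow> (nat \<Rightarrow> nat) \<Rightarrow> bool" where
  "schreier_iso p u v \<longleftrightarrow>
     (\<exists>f. bij_betw f (orbit p u) (orbit p v) \<and>
          (\<forall>x\<in>orbit p u. \<forall>y\<in>orbit p u. mult p (f x) (f y) = mult p x y))"

definition reach_in :: "nat \<Rightarrow> (nat \<Rightarrow> nat) set \<Rightarrow> (nat \<Rightarrow> nat) \<Rightarrow> (nat \<Rightarrow> nat) \<Rightarrow> bool" where
  "reach_in p S = (\<lambda>a b. a \<in> S \<and> b \<in> S \<and> sadj p a b)\<^sup>*\<^sup>*"

definition comp_in :: "nat \<Rightarrow> (nat \<Rightarrow> nat) set \<Rightarrow> (nat \<Rightarrow> nat) \<Rightarrow> (nat \<Rightarrow> nat) set" where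
  "comp_in p S x = {y. reach_in p S x y}"

definition one_ended :: "nat \<Rightarrow> (nat \<Rightarrow> nat) set \<Rightarrow> bool" where
  "one_ended p V \<longleftrightarrow> infinite V \<and>
     (\<forall>K. finite K \<longrightarrow> K \<subseteq> V \<longrightarrow>
        (\<forall>x\<in>V - K. \<forall>y\<in>V - K.
           infinite (comp_in p (V - K) x) \<longrightarrow> infinite (comp_in p (V - K) y) \<longrightarrow>
           reach_in p (V - K) x y))"

definition E1 :: "nat \<Rightarrow> (nat \<Rightarrow> nat) set" where
  "E1 p = {w \<in> Xinf p. one_ended p (orbit p w)}"

text \<open>Decomposition w = 0^k a_1 u_1 a_2 u_2 ... (indices j >= 1 for a and us).
  N_j = k + j + sum_{l<=j} |u_l|; so N_0 = k is the position of a_1 and N_(j-1) that of a_j.\<close>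

definition Npos :: "nat \<Rightarrow> (nat \<Rightarrow> nat list) \<Rightarrow> nat \<Rightarrow> nat" where
  "Npos k us j = k + j + (\<Sum>l=1..j. length (us l))"

definition decomp :: "nat \<Rightarrow> (nat \<Rightarrow> nat) \<Rightarrow> nat \<Rightarrow> (nat \<Rightarrow> nat) \<Rightarrow> (nat \<Rightarrow> nat list) \<Rightarrow> bool" where
  "decomp p w k a us \<longleftrightarrow>
     (\<forall>j\<ge>1. a j \<in> {1..p} \<and> a (Suc j) \<noteq> a j \<and> set (us j) \<subseteq> {0, a j}) \<and>
     (\<forall>n<k. w n = 0) \<and>
     (\<forall>j\<ge>1. w (Npos k us (j - 1)) = a j \<and>
        (\<forall>m<length (us j). w (Npos k us (j - 1) + 1 + m) = us j ! m))"

text \<open>The sequence L^w = (2^(N_j))_{j>=1}, re-indexed from 0: entry n is 2^(N_(n+1)).\<close>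

definition Lseq :: "nat \<Rightarrow> (nat \<Rightarrow> nat list) \<Rightarrow> nat \<Rightarrow> nat" where
  "Lseq k us n = 2 ^ Npos k us (Suc n)"

definition compatible :: "(nat \<Rightarrow> nat) \<Rightarrow> (nat \<Rightarrow> nat) \<Rightarrow> bool" where
  "compatible x y \<longleftrightarrow> (\<exists>l h. \<forall>n. x (l + n) = y (h + n))"

end

theory Submission
  imports Defs
begin

lemma gen_unch: "m < q \<Longrightarrow> x m \<noteq> 0 \<Longrightarrow> gen i x q = x q"
  unfolding gen_def by auto

lemma gen_pre: "\<forall>m<q. x m = 0 \<Longrightarrow> gen i x q = (if x q = 0 then i else if x q = i then 0 else x q)"
  unfolding gen_def by auto

definition Wf :: "nat \<Rightarrow> nat \<Rightarrow> (nat \<Rightarrow> nat) \<Rightarrow> nat \<Rightarrow> (nat \<Rightarrow> nat)" where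
  "Wf n b t v = (\<lambda>i. if i < n then (if bit v i then 0 else b) else t i)"

lemma allbits_iff: "(\<forall>m<q. bit (v::nat) m) \<longleftrightarrow> v mod 2^q = 2^q - 1"
proof -
  have "(\<forall>m<q. bit v m) \<longleftrightarrow> take_bit q v = mask q"
  proof
    assume "\<forall>m<q. bit v m"
    then show "take_bit q v = mask q" by (intro bit_eqI) (auto simp: bit_take_bit_iff bit_mask_iff)
  next
    assume "take_bit q v = mask q"
    then have "\<And>m. bit (take_bit q v) m = bit (mask q :: nat) m" by simp
    then show "\<forall>m<q. bit v m" by (auto simp: bit_take_bit_iff bit_mask_iff)
  qed
  then show ?thesis by (simp add: take_bit_eq_mod mask_eq_exp_minus_1)
qed

lemma bit_succ_carry:
  assumes "(v::nat) mod 2^q = 2^q - 1" shows "bit (v+1) q \<longleftrightarrow> \<not> bit v q"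
proof -
  have eq: "v = 2^q * (v div 2^q) + (2^q - 1)" using assms by (metis div_mult_mod_eq mult.commute)
  have pos: "(0::nat) < 2^q" by simp
  have "v + 1 = 2^q * (v div 2^q) + 2^q" using eq pos by linarith
  then have "v + 1 = 2^q * (v div 2^q + 1)" by (simp add: algebra_simps)
  then have "(v+1) div 2^q = v div 2^q + 1" using pos by simp
  then show ?thesis by (simp add: bit_iff_odd)
qed

lemma bit_succ_nocarry:
  assumes "(v::nat) mod 2^q \<noteq> 2^q - 1" shows "bit (v+1) q \<longleftrightarrow> bit v q"
proof -
  have m: "v mod 2^q < 2^q" by simp
  have lt: "v mod 2^q + 1 < 2^q" using assms m by linarith
  have "v + 1 = (v mod 2^q + 1) + 2^q * (v div 2^q)" by (metis add.assoc add.commute div_mult_mod_eq mult.commute)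
  then have "(v+1) div 2^q = ((v mod 2^q + 1) + 2^q * (v div 2^q)) div 2^q" by simp
  also have "\<dots> = v div 2^q + (v mod 2^q + 1) div 2^q" by (rule div_mult_self2) simp
  also have "(v mod 2^q + 1) div 2^q = 0" using lt by (rule div_less)
  finally have "(v+1) div 2^q = v div 2^q" by simp
  then show ?thesis by (simp add: bit_iff_odd)
qed


lemma W_succ:
  assumes b: "b \<noteq> 0" and v: "v + 1 < 2^n"
  shows "gen b (Wf n b t v) = Wf n b t (v+1)"
proof (rule ext)
  fix q
  show "gen b (Wf n b t v) q = Wf n b t (v+1) q"
  proof (cases "q < n")
    case True
    show ?thesis
    proof (cases "\<forall>m<q. bit v m")
      case allb: True
      then have z: "\<forall>m<q. Wf n b t v m = 0" using True by (auto simp: Wf_def)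
      have "bit (v+1) q \<longleftrightarrow> \<not> bit v q" using allb allbits_iff bit_succ_carry by blast
      then show ?thesis using gen_pre[OF z, of b] True b by (auto simp: Wf_def)
    next
      case False
      then obtain m where m: "m < q" "\<not> bit v m" by auto
      then have "Wf n b t v m \<noteq> 0" using True b by (auto simp: Wf_def)
      then have "gen b (Wf n b t v) q = Wf n b t v q" using m(1) gen_unch by blast
      moreover have "bit (v+1) q \<longleftrightarrow> bit v q" using False allbits_iff bit_succ_nocarry by blast
      ultimately show ?thesis using True by (simp add: Wf_def)
    qed
  next
    case False
    have "\<not> (\<forall>m<n. bit v m)"
    proof
      assume "\<forall>m<n. bit v m"
      then have "v mod 2^n = 2^n - 1" using allbits_iff by blast
      moreover have "v mod 2^n = v" using v by simp
      ultimately show False using v by simp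
    qed
    then obtain m where m: "m < n" "\<not> bit v m" by auto
    then have "Wf n b t v m \<noteq> 0" using b by (auto simp: Wf_def)
    then have "gen b (Wf n b t v) q = Wf n b t v q" using m(1) False gen_unch[of m q] by auto
    then show ?thesis using False by (simp add: Wf_def)
  qed
qed

lemma bit_mask_nat: "bit (2^n - 1 :: nat) i \<longleftrightarrow> i < n"
proof -
  have m: "(2^n - 1::nat) = mask n" by (simp add: mask_eq_exp_minus_1)
  show ?thesis unfolding m by (simp add: bit_mask_iff)
qed

lemma bit_mask_nat': "bit (2^n - Suc 0 :: nat) i \<longleftrightarrow> i < n"
  using bit_mask_nat by simp

lemma W_top: "Wf n b t (2^n - 1) = (\<lambda>i. if i < n then 0 else t i)"
  by (rule ext) (simp add: Wf_def bit_mask_nat bit_mask_nat')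

lemma W_top': "Wf n b t (2^n - Suc 0) = (\<lambda>i. if i < n then 0 else t i)"
  using W_top[of n b t] by simp

lemma W_wrap:
  assumes "t n \<noteq> 0" "t n \<noteq> b"
  shows "gen b (Wf n b t (2^n - 1)) = Wf n b t 0"
proof -
  have "gen b (\<lambda>i. if i < n then 0 else t i) = Wf n b t 0"
  proof (rule ext)
    fix q
    show "gen b (\<lambda>i. if i < n then 0 else t i) q = Wf n b t 0 q"
    proof (cases "q \<le> n")
      case True
      have z: "\<forall>m<q. (\<lambda>i. if i < n then 0 else t i) m = 0" using True by auto
      show ?thesis using gen_pre[OF z, of b] True assms by (auto simp: Wf_def)
    next
      case False
      have "(\<lambda>i. if i < n then 0 else t i) n \<noteq> 0" using assms by simp
      then have "gen b (\<lambda>i. if i < n then 0 else t i) q = (\<lambda>i. if i < n then 0 else t i) q"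
        using False gen_unch[of n q] by auto
      then show ?thesis using False by (simp add: Wf_def)
    qed
  qed
  then show ?thesis by (simp only: W_top)
qed

lemma nat_lt_nobit: "(v::nat) < 2^n \<Longrightarrow> n \<le> i \<Longrightarrow> \<not> bit v i"
  by (metis bit_take_bit_iff not_le take_bit_nat_eq_self)

lemma W_inj:
  assumes "v < 2^n" "v' < 2^n" "b \<noteq> 0" "Wf n b t v = Wf n b t v'"
  shows "v = v'"
proof (rule bit_eqI)
  fix i
  show "bit v i \<longleftrightarrow> bit v' i"
  proof (cases "i < n")
    case True
    have "Wf n b t v i = Wf n b t v' i" using assms(4) by simp
    then show ?thesis using True assms(3) by (auto simp: Wf_def split: if_splits)
  next
    case False
    then show ?thesis using nat_lt_nobit assms(1,2) by auto
  qed
qed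

lemma bit_add_exp: "(v::nat) < 2^n \<Longrightarrow> bit (v + 2^n) i \<longleftrightarrow> (i = n \<or> bit v i)"
proof -
  assume v: "v < 2^n"
  have "\<And>j. \<not> bit v j \<or> \<not> bit (2^n::nat) j" using nat_lt_nobit[OF v] by (auto simp: bit_exp_iff)
  then have "bit (v + 2^n) i \<longleftrightarrow> bit v i \<or> bit (2^n::nat) i" by (rule bit_disjunctive_add_iff)
  then show ?thesis by (auto simp: bit_exp_iff)
qed

lemma W_surj:
  "(\<forall>i<n. x i = 0 \<or> x i = b) \<Longrightarrow> (\<forall>i\<ge>n. x i = t i) \<Longrightarrow> \<exists>v<2^n. x = Wf n b t v"
proof (induction n arbitrary: t)
  case 0
  then show ?case by (intro exI[of _ 0]) (auto simp: Wf_def)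
next
  case (Suc n)
  have h1: "\<forall>i<n. x i = 0 \<or> x i = b" using Suc.prems by auto
  have h2: "\<forall>i\<ge>n. x i = (t(n := x n)) i"
  proof (intro allI impI)
    fix i assume "n \<le> i"
    then show "x i = (t(n := x n)) i" using Suc.prems(2) by (cases "i = n") auto
  qed
  obtain v where v: "v < 2^n" "x = Wf n b (t(n := x n)) v" using Suc.IH[OF h1 h2] by blast
  define v' where "v' = v + (if x n = 0 then 2^n else 0)"
  have "v' < 2^Suc n" using v(1) by (simp add: v'_def)
  moreover have "x = Wf (Suc n) b t v'"
  proof (rule ext)
    fix i
    show "x i = Wf (Suc n) b t v' i"
    proof (cases "x n = 0")
      case True
      then have bv: "bit v' i \<longleftrightarrow> (i = n \<or> bit v i)" using bit_add_exp[OF v(1)] by (simp add: v'_def)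
      show ?thesis
        using v(2) bv True Suc.prems(2) nat_lt_nobit[OF v(1)]
        by (cases "i < n"; cases "i = n") (auto simp: Wf_def fun_eq_iff)
    next
      case False
      then have xb: "x n = b" using Suc.prems(1) by auto
      have bv: "bit v' i \<longleftrightarrow> bit v i" using False by (simp add: v'_def)
      show ?thesis
        using v(2) bv False xb Suc.prems(2) nat_lt_nobit[OF v(1)]
        by (cases "i < n"; cases "i = n") (auto simp: Wf_def fun_eq_iff)
    qed
  qed
  ultimately show ?case by blast
qed


definition LZ :: "(nat \<Rightarrow> nat) \<Rightarrow> nat \<Rightarrow> nat \<Rightarrow> bool" where
  "LZ w n a \<longleftrightarrow> (\<exists>l<n. w l = a \<and> (\<forall>i. l < i \<and> i < n \<longrightarrow> w i = 0 \<or> w i = a))"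

definition Tset :: "nat \<Rightarrow> nat \<Rightarrow> (nat \<Rightarrow> nat) \<Rightarrow> (nat \<Rightarrow> nat) set" where
  "Tset p n t = {w. (\<forall>i\<ge>n. w i = t i) \<and> (\<forall>i<n. w i \<le> p)}"

definition Bset :: "nat \<Rightarrow> nat \<Rightarrow> nat \<Rightarrow> (nat \<Rightarrow> nat) \<Rightarrow> (nat \<Rightarrow> nat) set" where
  "Bset p n a t = {w. (\<forall>i\<ge>n. w i = t i) \<and> (\<forall>i<n. w i \<le> p) \<and> LZ w n a}"

lemma LZ_Suc: "LZ w (Suc n) a \<longleftrightarrow> w n = a \<or> (w n = 0 \<and> LZ w n a)"
proof
  assume "LZ w (Suc n) a"
  then obtain l where l: "l < Suc n" "w l = a" "\<forall>i. l < i \<and> i < Suc n \<longrightarrow> w i = 0 \<or> w i = a"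
    unfolding LZ_def by blast
  show "w n = a \<or> (w n = 0 \<and> LZ w n a)"
  proof (cases "l = n")
    case True then show ?thesis using l by simp
  next
    case False
    then have "l < n" using l by simp
    then have "w n = 0 \<or> w n = a" using l(3) by simp
    moreover have "LZ w n a" unfolding LZ_def
      by (rule exI[of _ l]) (use \<open>l < n\<close> l in auto)
    ultimately show ?thesis by blast
  qed
next
  assume "w n = a \<or> (w n = 0 \<and> LZ w n a)"
  then show "LZ w (Suc n) a"
  proof
    assume "w n = a" then show ?thesis unfolding LZ_def by (intro exI[of _ n]) auto
  next
    assume h: "w n = 0 \<and> LZ w n a"
    then obtain l where l: "l < n" "w l = a" "\<forall>i. l < i \<and> i < n \<longrightarrow> w i = 0 \<or> w i = a"
      unfolding LZ_def by blast
    show ?thesis unfolding LZ_def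
      by (rule exI[of _ l]) (use l h in \<open>auto simp: less_Suc_eq\<close>)
  qed
qed

lemma Tset_0: "Tset p 0 t = {t}"
  by (auto simp: Tset_def fun_eq_iff)

lemma Tset_Suc: "Tset p (Suc n) t = (\<Union>c\<in>{0..p}. Tset p n (t(n:=c)))"
proof (intro set_eqI iffI)
  fix w assume "w \<in> Tset p (Suc n) t"
  then have A1: "\<forall>i\<ge>Suc n. w i = t i" and A2: "\<forall>i<Suc n. w i \<le> p" unfolding Tset_def by blast+
  have B1: "\<forall>i\<ge>n. w i = (t(n:=w n)) i"
  proof (intro allI impI)
    fix i assume i: "n \<le> i"
    show "w i = (t(n:=w n)) i"
    proof (cases "i = n")
      case True then show ?thesis by simp
    next
      case False
      then have "Suc n \<le> i" using i by simp
      then show ?thesis using A1 False by simp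
    qed
  qed
  have B2: "\<forall>i<n. w i \<le> p" using A2 by simp
  have "w \<in> Tset p n (t(n:=w n))" unfolding Tset_def using B1 B2 by blast
  moreover have "w n \<in> {0..p}" using A2 by simp
  ultimately show "w \<in> (\<Union>c\<in>{0..p}. Tset p n (t(n:=c)))" by blast
next
  fix w assume "w \<in> (\<Union>c\<in>{0..p}. Tset p n (t(n:=c)))"
  then obtain c where c: "c \<le> p" "w \<in> Tset p n (t(n:=c))" by auto
  then have A1: "\<forall>i\<ge>n. w i = (t(n:=c)) i" and A2: "\<forall>i<n. w i \<le> p" unfolding Tset_def by blast+
  have wn: "w n = c" using A1 by simp
  have B2: "\<forall>i<Suc n. w i \<le> p"
  proof (intro allI impI)
    fix i assume "i < Suc n"
    then show "w i \<le> p" using A2 wn c(1) by (cases "i = n") simp_all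
  qed
  have B1: "\<forall>i\<ge>Suc n. w i = t i"
  proof (intro allI impI)
    fix i assume "Suc n \<le> i"
    then show "w i = t i" using A1 by simp
  qed
  show "w \<in> Tset p (Suc n) t" unfolding Tset_def using B1 B2 by blast
qed

lemma Tset_card: "finite (Tset p n t) \<and> card (Tset p n t) = (p+1)^n"
proof (induction n arbitrary: t)
  case 0 then show ?case by (simp add: Tset_0)
next
  case (Suc n)
  have tn: "w n = c" if "w \<in> Tset p n (t(n:=c))" for w c
    using that unfolding Tset_def by (metis (mono_tags, lifting) fun_upd_same mem_Collect_eq order_refl)
  have disj: "\<forall>i\<in>{0..p}. \<forall>j\<in>{0..p}. i \<noteq> j \<longrightarrow> Tset p n (t(n:=i)) \<inter> Tset p n (t(n:=j)) = {}"
    using tn by blast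
  have fin: "\<forall>i\<in>{0..p}. finite (Tset p n (t(n:=i)))" using Suc.IH by blast
  have "card (\<Union>c\<in>{0..p}. Tset p n (t(n:=c))) = (\<Sum>c\<in>{0..p}. card (Tset p n (t(n:=c))))"
    by (rule card_UN_disjoint) (use disj fin in auto)
  also have "\<dots> = (\<Sum>c\<in>{0..p}. (p+1)^n)" using Suc.IH by simp
  also have "\<dots> = (p+1)^Suc n" by simp
  finally show ?case using fin by (simp add: Tset_Suc)
qed

lemma Bset_0: "Bset p 0 a t = {}"
  by (auto simp: Bset_def LZ_def)

lemma tail_upd: "(\<forall>i\<ge>n. w i = (t(n:=c)) i) \<longleftrightarrow> w n = c \<and> (\<forall>i\<ge>Suc n. w i = t i)"
proof
  assume h: "\<forall>i\<ge>n. w i = (t(n:=c)) i"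
  have "w n = c" using h by simp
  moreover have "\<forall>i\<ge>Suc n. w i = t i"
  proof (intro allI impI)
    fix i assume "Suc n \<le> i" then show "w i = t i" using h by simp
  qed
  ultimately show "w n = c \<and> (\<forall>i\<ge>Suc n. w i = t i)" by blast
next
  assume h: "w n = c \<and> (\<forall>i\<ge>Suc n. w i = t i)"
  show "\<forall>i\<ge>n. w i = (t(n:=c)) i"
  proof (intro allI impI)
    fix i assume i: "n \<le> i"
    show "w i = (t(n:=c)) i"
    proof (cases "i = n")
      case True then show ?thesis using h by simp
    next
      case False then have "Suc n \<le> i" using i by simp
      then show ?thesis using h False by simp
    qed
  qed
qed

lemma less_Suc_all: "(\<forall>i<Suc n. P i) \<longleftrightarrow> (\<forall>i<n. P i) \<and> P n"
  by (auto simp: less_Suc_eq)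

lemma Bset_Suc:
  assumes "a \<noteq> 0" "a \<le> p"
  shows "Bset p (Suc n) a t = Bset p n a (t(n:=0)) \<union> Tset p n (t(n:=a))"
proof (intro set_eqI)
  fix w
  have "w \<in> Bset p (Suc n) a t \<longleftrightarrow>
      (\<forall>i\<ge>Suc n. w i = t i) \<and> (\<forall>i<n. w i \<le> p) \<and> w n \<le> p \<and> (w n = a \<or> (w n = 0 \<and> LZ w n a))"
    unfolding Bset_def LZ_Suc less_Suc_all by blast
  also have "\<dots> \<longleftrightarrow> ((w n = 0 \<and> (\<forall>i\<ge>Suc n. w i = t i)) \<and> (\<forall>i<n. w i \<le> p) \<and> LZ w n a) \<or>
      ((w n = a \<and> (\<forall>i\<ge>Suc n. w i = t i)) \<and> (\<forall>i<n. w i \<le> p))"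
    using assms by auto
  also have "\<dots> \<longleftrightarrow> w \<in> Bset p n a (t(n:=0)) \<union> Tset p n (t(n:=a))"
    unfolding Bset_def Tset_def tail_upd by blast
  finally show "w \<in> Bset p (Suc n) a t \<longleftrightarrow> w \<in> Bset p n a (t(n:=0)) \<union> Tset p n (t(n:=a))" .
qed

lemma Bset_card:
  assumes "a \<noteq> 0" "a \<le> p"
  shows "finite (Bset p n a t) \<and> card (Bset p n a t) = (\<Sum>l<n. (p+1)^l)"
proof (induction n arbitrary: t)
  case 0 then show ?case by (simp add: Bset_0)
next
  case (Suc n)
  have fin1: "finite (Bset p n a (t(n:=0)))" using Suc.IH by blast
  have fin2: "finite (Tset p n (t(n:=a)))" using Tset_card by blast
  have b0: "w n = 0" if "w \<in> Bset p n a (t(n:=0))" for w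
    using that unfolding Bset_def by (metis (mono_tags, lifting) fun_upd_same mem_Collect_eq order_refl)
  have ta: "w n = a" if "w \<in> Tset p n (t(n:=a))" for w
    using that unfolding Tset_def by (metis (mono_tags, lifting) fun_upd_same mem_Collect_eq order_refl)
  have disj: "Bset p n a (t(n:=0)) \<inter> Tset p n (t(n:=a)) = {}"
    using assms(1) b0 ta by fastforce
  have "card (Bset p (Suc n) a t) = card (Bset p n a (t(n:=0))) + card (Tset p n (t(n:=a)))"
    unfolding Bset_Suc[OF assms] by (rule card_Un_disjoint[OF fin1 fin2 disj])
  also have "\<dots> = (\<Sum>l<Suc n. (p+1)^l)" using Suc.IH Tset_card by simp
  finally show ?case using fin1 fin2 by (simp add: Bset_Suc[OF assms])
qed

lemma bsum_mono: "strict_mono (\<lambda>n. \<Sum>l<n. (p+1::nat)^l)"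
  unfolding strict_mono_Suc_iff by simp


lemma gen_vals: "gen i x q = x q \<or> (gen i x q = i \<and> x q = 0) \<or> (gen i x q = 0 \<and> x q = i)"
  unfolding gen_def by auto

lemma gen_le: "i \<le> p \<Longrightarrow> x q \<le> p \<Longrightarrow> gen i x q \<le> p"
  using gen_vals[of i x q] by auto

lemma gen_le_inv: "i \<le> p \<Longrightarrow> gen i x q \<le> p \<Longrightarrow> x q \<le> p"
  using gen_vals[of i x q] by auto

lemma Bset_fwd:
  assumes x: "x \<in> Bset p n a t" and a: "a \<noteq> 0" and i: "1 \<le> i" "i \<le> p" and y: "y = gen i x"
  shows "y \<in> Bset p n a t \<or> y = (\<lambda>q. if q < n then 0 else t q)"
proof -
  from x have T: "\<forall>q\<ge>n. x q = t q" and L: "\<forall>q<n. x q \<le> p" and Z: "LZ x n a" by (auto simp: Bset_def)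
  from Z obtain l where l: "l < n" "x l = a" "\<forall>q. l < q \<and> q < n \<longrightarrow> x q = 0 \<or> x q = a"
    unfolding LZ_def by blast
  have unch: "\<forall>q>l. y q = x q" using l(2) a y gen_unch[of l _ x i] by auto
  have T': "\<forall>q\<ge>n. y q = t q" using unch T l(1) by auto
  have L': "\<forall>q<n. y q \<le> p" using L i y gen_le by auto
  show ?thesis
  proof (cases "\<exists>m<l. x m \<noteq> 0")
    case True
    then obtain m where "m < l" "x m \<noteq> 0" by blast
    then have "y l = x l" using y gen_unch by blast
    then have "LZ y n a" unfolding LZ_def using l unch by (intro exI[of _ l]) auto
    then show ?thesis using T' L' by (auto simp: Bset_def)
  next
    case False
    then have z: "\<forall>m<l. x m = 0" by auto
    have pre: "\<forall>m<l. y m = i"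
    proof (intro allI impI)
      fix m assume "m < l"
      then show "y m = i" using gen_pre[of m x i] z y by auto
    qed
    have yl: "y l = (if a = i then 0 else a)" using gen_pre[OF z, of i] y l(2) a by auto
    show ?thesis
    proof (cases "i = a")
      case False
      then have "LZ y n a" unfolding LZ_def using l unch yl by (intro exI[of _ l]) auto
      then show ?thesis using T' L' by (auto simp: Bset_def)
    next
      case True
      show ?thesis
      proof (cases "l > 0")
        case True
        have "LZ y n a" unfolding LZ_def
        proof (intro exI[of _ 0] conjI allI impI)
          show "0 < n" using l(1) by simp
          show "y 0 = a" using pre True \<open>i = a\<close> by auto
          fix q assume "0 < q \<and> q < n"
          then show "y q = 0 \<or> y q = a" using pre yl unch l(3) \<open>i = a\<close>
            by (cases "q < l"; cases "q = l") auto
        qed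
        then show ?thesis using T' L' by (auto simp: Bset_def)
      next
        case False
        then have l0: "l = 0" by simp
        show ?thesis
        proof (cases "\<exists>q. 0 < q \<and> q < n \<and> x q = a")
          case True
          then obtain q where q: "0 < q" "q < n" "x q = a" by blast
          have "LZ y n a" unfolding LZ_def
            by (rule exI[of _ q]) (use q unch l(3) l0 in auto)
          then show ?thesis using T' L' by (auto simp: Bset_def)
        next
          case False
          have "y = (\<lambda>q. if q < n then 0 else t q)"
          proof (rule ext)
            fix q show "y q = (if q < n then 0 else t q)"
            proof (cases "q < n")
              case qn: True
              show ?thesis
              proof (cases "q = 0")
                case True then show ?thesis using yl l0 \<open>i = a\<close> qn by simp
              next
                case q0: False
                then have "y q = x q" using unch l0 by simp
                moreover have "x q = 0 \<or> x q = a" using l(3) l0 q0 qn by simp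
                moreover have "x q \<noteq> a" using False q0 qn by blast
                ultimately show ?thesis using qn by simp
              qed
            next
              case False then show ?thesis using T' by simp
            qed
          qed
          then show ?thesis by blast
        qed
      qed
    qed
  qed
qed

lemma Bset_bwd:
  assumes x: "x \<in> Bset p n a t" and a: "a \<noteq> 0" and tn: "t n \<noteq> 0" "t n \<noteq> a"
    and i: "1 \<le> i" "i \<le> p" and xy: "x = gen i y"
  shows "y \<in> Bset p n a t \<or> y = (\<lambda>q. if q < n then 0 else t q)"
proof -
  from x have T: "\<forall>q\<ge>n. x q = t q" and L: "\<forall>q<n. x q \<le> p" and Z: "LZ x n a" by (auto simp: Bset_def)
  from Z obtain l where l: "l < n" "x l = a" "\<forall>q. l < q \<and> q < n \<longrightarrow> x q = 0 \<or> x q = a"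
    unfolding LZ_def by blast
  show ?thesis
  proof (cases "\<forall>m<n. y m = 0")
    case True
    have xn: "x n = (if y n = 0 then i else if y n = i then 0 else y n)" using gen_pre[OF True, of i] xy by simp
    have xl: "x l = i" using gen_pre[of l y i] True l(1) xy by auto
    have "y n \<noteq> 0"
    proof
      assume "y n = 0"
      then have "x n = i" using xn by simp
      then have "t n = a" using T xl l(2) by auto
      then show False using tn by simp
    qed
    moreover have "y n \<noteq> i"
    proof
      assume "y n = i"
      then have "x n = 0" using xn i by simp
      then show False using T tn by auto
    qed
    ultimately have yn: "y n = t n" using xn T by auto
    have unch2: "\<forall>q>n. y q = x q"
    proof (intro allI impI)
      fix q assume "n < q"
      then show "y q = x q" using gen_unch[of n q y i] \<open>y n \<noteq> 0\<close> xy by simp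
    qed
    have "y = (\<lambda>q. if q < n then 0 else t q)"
    proof (rule ext)
      fix q
      show "y q = (if q < n then 0 else t q)"
      proof (cases "q < n")
        case True then show ?thesis using \<open>\<forall>m<n. y m = 0\<close> by simp
      next
        case False
        show ?thesis
        proof (cases "q = n")
          case True then show ?thesis using yn by simp
        next
          case False
          then have "n < q" using \<open>\<not> q < n\<close> by simp
          then show ?thesis using unch2 T by simp
        qed
      qed
    qed
    then show ?thesis by blast
  next
    case False
    then obtain m0 where m0: "m0 < n" "y m0 \<noteq> 0" by auto
    have T': "\<forall>q\<ge>n. y q = t q" using gen_unch[of m0 _ y i] m0 xy T by auto
    have L': "\<forall>q<n. y q \<le> p" using L i(2) gen_le_inv[of i p y] xy by auto
    have "LZ y n a"
    proof (cases "\<exists>m<l. y m \<noteq> 0")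
      case True
      then obtain m where m: "m < l" "y m \<noteq> 0" by blast
      have "\<forall>q\<ge>l. x q = y q"
      proof (intro allI impI)
        fix q assume "l \<le> q"
        then have "m < q" using m(1) by simp
        then show "x q = y q" using gen_unch[of m q y i] m(2) xy by simp
      qed
      then show ?thesis unfolding LZ_def using l by (intro exI[of _ l]) auto
    next
      case False
      then have z: "\<forall>m<l. y m = 0" by auto
      have xl: "x l = (if y l = 0 then i else if y l = i then 0 else y l)" using gen_pre[OF z, of i] xy by simp
      show ?thesis
      proof (cases "y l = 0")
        case False
        then have "y l = a" using xl l(2) a by (auto split: if_splits)
        moreover have "\<forall>q>l. x q = y q" using gen_unch[of l _ y i] False xy by auto
        ultimately show ?thesis unfolding LZ_def using l by (intro exI[of _ l]) auto
      next
        case True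
        then have ia: "i = a" using xl l(2) by simp
        define f where "f = (LEAST m. y m \<noteq> 0)"
        have yf: "y f \<noteq> 0" unfolding f_def by (rule LeastI[where P="\<lambda>m. y m \<noteq> 0"]) (rule m0(2))
        have fle: "f \<le> m0" unfolding f_def using m0 by (simp add: Least_le)
        have bef: "\<forall>m<f. y m = 0" unfolding f_def using not_less_Least by blast
        have lf: "l < f"
        proof (rule ccontr)
          assume "\<not> l < f"
          then have "f \<le> l" by simp
          then show False using z True yf by (cases "f = l") auto
        qed
        have xf: "x f = (if y f = i then 0 else y f)" using gen_pre[OF bef, of i] yf xy by simp
        have "x f = 0 \<or> x f = a" using l(3) lf fle m0(1) by auto
        then have yfa: "y f = a" using xf yf ia by (auto split: if_splits)
        have unchf: "\<forall>q>f. x q = y q" using gen_unch[of f _ y i] yf xy by auto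
        show ?thesis unfolding LZ_def
        proof (rule exI[of _ f], intro conjI allI impI)
          show "f < n" using fle m0(1) by simp
          show "y f = a" by (rule yfa)
          fix q assume q: "f < q \<and> q < n"
          then have "x q = y q" using unchf by simp
          moreover have "x q = 0 \<or> x q = a" using l(3) q lf by simp
          ultimately show "y q = 0 \<or> y q = a" by simp
        qed
      qed
    qed
    then show ?thesis using T' L' by (auto simp: Bset_def)
  qed
qed

lemma Bset_closed:
  assumes x: "x \<in> Bset p n a t" and a: "a \<noteq> 0" and tn: "t n \<noteq> 0" "t n \<noteq> a"
    and s: "sadj p x y"
  shows "y \<in> Bset p n a t \<or> y = (\<lambda>q. if q < n then 0 else t q)"
proof -
  from s obtain i where i: "1 \<le> i" "i \<le> p" and d: "y = gen i x \<or> x = gen i y"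
    unfolding sadj_def by auto
  from d show ?thesis
  proof
    assume "y = gen i x" then show ?thesis using Bset_fwd[OF x a i] by blast
  next
    assume "x = gen i y" then show ?thesis using Bset_bwd[OF x a tn i] by blast
  qed
qed


definition inR :: "nat \<Rightarrow> (nat \<Rightarrow> nat) set \<Rightarrow> (nat \<Rightarrow> nat) \<Rightarrow> (nat \<Rightarrow> nat) \<Rightarrow> bool" where
  "inR p S = (\<lambda>x y. x \<in> S \<and> y \<in> S \<and> sadj p x y)"

lemma inR_mono: assumes "S \<subseteq> S'" shows "(inR p S)\<^sup>*\<^sup>* x y \<Longrightarrow> (inR p S')\<^sup>*\<^sup>* x y"
proof (induction rule: rtranclp_induct)
  case base then show ?case by simp
next
  case (step y z)
  then have "inR p S' y z" using assms by (auto simp: inR_def)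
  then show ?case using step by (meson rtranclp.rtrancl_into_rtrancl)
qed

lemma inR_edge: "1 \<le> i \<Longrightarrow> i \<le> p \<Longrightarrow> x \<in> S \<Longrightarrow> gen i x \<in> S \<Longrightarrow> (inR p S)\<^sup>*\<^sup>* x (gen i x)"
  by (rule r_into_rtranclp) (auto simp: inR_def sadj_def)

lemma gen_block:
  assumes "w m = c" "c \<noteq> 0"
  shows "gen c (\<lambda>i. if i < m then 0 else w i) = (\<lambda>i. if i < m then c else if i = m then 0 else w i)"
proof (rule ext)
  fix q
  show "gen c (\<lambda>i. if i < m then 0 else w i) q = (if q < m then c else if q = m then 0 else w q)"
  proof (cases "q \<le> m")
    case True
    have "\<forall>j<q. (\<lambda>i. if i < m then 0 else w i) j = 0" using True by auto
    from gen_pre[OF this, of c] show ?thesis using True assms by auto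
  next
    case False
    have nz: "(\<lambda>i. if i < m then 0 else w i) m \<noteq> 0" using assms by simp
    have "m < q" using False by simp
    from gen_unch[of m q "\<lambda>i. if i < m then 0 else w i" c, OF this nz] show ?thesis using False by auto
  qed
qed

lemma P_conn:
  "(\<forall>i<m. w i \<le> p) \<Longrightarrow> (inR p (Tset p m w))\<^sup>*\<^sup>* w (\<lambda>i. if i < m then 0 else w i)"
proof (induction m arbitrary: w)
  case 0 then show ?case by simp
next
  case (Suc m)
  have wm: "w m \<le> p" using Suc.prems by simp
  have sub1: "Tset p m w \<subseteq> Tset p (Suc m) w"
    using wm by (auto simp: Tset_def less_Suc_eq)
  have IH1: "(inR p (Tset p (Suc m) w))\<^sup>*\<^sup>* w (\<lambda>i. if i < m then 0 else w i)"
    using Suc.IH[of w] Suc.prems inR_mono[OF sub1] by auto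
  show ?case
  proof (cases "w m = 0")
    case True
    have "(\<lambda>i. if i < m then 0 else w i) = (\<lambda>i. if i < Suc m then 0 else w i)"
      using True by (auto simp: fun_eq_iff less_Suc_eq)
    then show ?thesis using IH1 by simp
  next
    case False
    define w1 where "w1 = (\<lambda>i. if i < m then 0 else w i)"
    define w2 where "w2 = (\<lambda>i. if i < m then w m else if i = m then 0 else w i)"
    have g: "gen (w m) w1 = w2" unfolding w1_def w2_def using gen_block[of w m "w m"] False by simp
    have w1T: "w1 \<in> Tset p (Suc m) w" using Suc.prems by (auto simp: w1_def Tset_def)
    have w2T: "w2 \<in> Tset p (Suc m) w" using Suc.prems by (auto simp: w2_def Tset_def)
    have E: "(inR p (Tset p (Suc m) w))\<^sup>*\<^sup>* w1 w2"
      using inR_edge[of "w m" p w1] g w1T w2T wm False by auto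
    have sub2: "Tset p m w2 \<subseteq> Tset p (Suc m) w"
      by (auto simp: Tset_def w2_def less_Suc_eq)
    have "\<forall>i<m. w2 i \<le> p" using wm by (auto simp: w2_def)
    then have IH2: "(inR p (Tset p (Suc m) w))\<^sup>*\<^sup>* w2 (\<lambda>i. if i < m then 0 else w2 i)"
      using Suc.IH[of w2] inR_mono[OF sub2] by auto
    have "(\<lambda>i. if i < m then 0 else w2 i) = (\<lambda>i. if i < Suc m then 0 else w i)"
      by (auto simp: fun_eq_iff w2_def less_Suc_eq)
    then show ?thesis using IH1 E IH2 unfolding w1_def by (metis rtranclp_trans)
  qed
qed

lemma Q_conn:
  assumes a: "a \<noteq> 0" "a \<le> p"
  shows "(\<forall>i<m. w i \<le> p) \<Longrightarrow> LZ w m a \<Longrightarrow>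
    (inR p (Bset p m a w))\<^sup>*\<^sup>* w (\<lambda>i. if i = 0 then a else if i < m then 0 else w i)"
proof (induction m arbitrary: w)
  case 0 then show ?case by (simp add: LZ_def)
next
  case (Suc m)
  have case0: "(inR p (Bset p (Suc m) a w'))\<^sup>*\<^sup>* w' (\<lambda>i. if i = 0 then a else if i < Suc m then 0 else w' i)"
    if h: "\<forall>i<Suc m. w' i \<le> p" "w' m = 0" "LZ w' m a" for w'
  proof -
    have sub: "Bset p m a w' \<subseteq> Bset p (Suc m) a w'"
      using h(2) by (auto simp: Bset_def less_Suc_eq LZ_Suc)
    have "(inR p (Bset p m a w'))\<^sup>*\<^sup>* w' (\<lambda>i. if i = 0 then a else if i < m then 0 else w' i)"
      using Suc.IH[of w'] h by auto
    moreover have "m \<noteq> 0" using h(3) by (auto simp: LZ_def)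
    then have "(\<lambda>i. if i = 0 then a else if i < m then 0 else w' i) = (\<lambda>i. if i = 0 then a else if i < Suc m then 0 else w' i)"
      using h(2) by (auto simp: fun_eq_iff less_Suc_eq)
    ultimately show ?thesis using inR_mono[OF sub] by metis
  qed
  have "w m = a \<or> (w m = 0 \<and> LZ w m a)" using Suc.prems(2) by (simp add: LZ_Suc)
  then show ?case
  proof
    assume "w m = 0 \<and> LZ w m a"
    then show ?thesis using case0[of w] Suc.prems(1) by blast
  next
    assume wm: "w m = a"
    show ?thesis
    proof (cases "m = 0")
      case True
      have "(\<lambda>i. if i = 0 then a else if i < Suc m then 0 else w i) = w"
        using True wm by (auto simp: fun_eq_iff)
      then show ?thesis by simp
    next
      case False
      define w1 where "w1 = (\<lambda>i. if i < m then 0 else w i)"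
      define w2 where "w2 = (\<lambda>i. if i < m then a else if i = m then 0 else w i)"
      have sub1: "Tset p m w \<subseteq> Bset p (Suc m) a w"
        using wm a by (auto simp: Tset_def Bset_def less_Suc_eq LZ_Suc)
      have P1: "(inR p (Bset p (Suc m) a w))\<^sup>*\<^sup>* w w1"
        using P_conn[of m w p] Suc.prems(1) inR_mono[OF sub1] unfolding w1_def by auto
      have g: "gen a w1 = w2" unfolding w1_def w2_def using gen_block[of w m a] wm a by simp
      have w1B: "w1 \<in> Bset p (Suc m) a w" using sub1 Suc.prems(1) by (auto simp: w1_def Tset_def)
      have LZ2: "LZ w2 m a" unfolding LZ_def
        by (rule exI[of _ 0]) (use False in \<open>auto simp: w2_def\<close>)
      have w2le: "\<forall>i<Suc m. w2 i \<le> p" using a Suc.prems(1) by (auto simp: w2_def)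
      have w2B: "w2 \<in> Bset p (Suc m) a w"
        using LZ2 w2le by (auto simp: Bset_def w2_def LZ_Suc)
      have E: "(inR p (Bset p (Suc m) a w))\<^sup>*\<^sup>* w1 w2"
        using inR_edge[of a p w1] g w1B w2B a by auto
      have C2: "(inR p (Bset p (Suc m) a w2))\<^sup>*\<^sup>* w2 (\<lambda>i. if i = 0 then a else if i < Suc m then 0 else w2 i)"
        using case0[of w2] w2le LZ2 by (simp add: w2_def)
      have eqB: "Bset p (Suc m) a w2 = Bset p (Suc m) a w"
        by (auto simp: Bset_def w2_def)
      have R: "(\<lambda>i. if i = 0 then a else if i < Suc m then 0 else w2 i) = (\<lambda>i. if i = 0 then a else if i < Suc m then 0 else w i)"
        by (auto simp: fun_eq_iff w2_def)
      have C2': "(inR p (Bset p (Suc m) a w))\<^sup>*\<^sup>* w2 (\<lambda>i. if i = 0 then a else if i < Suc m then 0 else w i)"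
        using C2 unfolding eqB R .
      show ?thesis using rtranclp_trans[OF rtranclp_trans[OF P1 E] C2'] .
    qed
  qed
qed


lemma sadj_sym: "sadj p x y = sadj p y x" unfolding sadj_def by auto

lemma reach_inR: "reach_in p S = (inR p S)\<^sup>*\<^sup>*" by (simp add: reach_in_def inR_def)

lemma inR_conv: "(inR p S)\<inverse>\<inverse> = inR p S"
  by (auto simp: fun_eq_iff inR_def sadj_sym)

lemma inR_sym: "(inR p S)\<^sup>*\<^sup>* x y \<Longrightarrow> (inR p S)\<^sup>*\<^sup>* y x"
  using rtranclp_converseI[of "inR p S" x y] inR_conv by metis

lemma reach_sym: "reach_in p S x y \<Longrightarrow> reach_in p S y x"
  using inR_sym by (simp add: reach_inR)

lemma reach_trans: "reach_in p S x y \<Longrightarrow> reach_in p S y z \<Longrightarrow> reach_in p S x z"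
  unfolding reach_in_def by (rule rtranclp_trans)

lemma comp_eq: "reach_in p S x y \<Longrightarrow> comp_in p S x = comp_in p S y"
  unfolding comp_in_def using reach_sym reach_trans by blast

lemma comp_sub: "comp_in p S x \<subseteq> insert x S"
proof
  fix y assume "y \<in> comp_in p S x"
  then have "(inR p S)\<^sup>*\<^sup>* x y" by (simp add: comp_in_def reach_inR)
  then show "y \<in> insert x S"
    by (induction rule: rtranclp_induct) (auto simp: inR_def)
qed

lemma orbit_closed: "x \<in> orbit p u \<Longrightarrow> sadj p x y \<Longrightarrow> y \<in> orbit p u"
  unfolding orbit_def by (auto intro: rtranclp.rtrancl_into_rtrancl)

lemma inR_orbit: assumes x: "x \<in> orbit p u"
  shows "(inR p S)\<^sup>*\<^sup>* x y \<Longrightarrow> (inR p (S \<inter> orbit p u))\<^sup>*\<^sup>* x y \<and> y \<in> orbit p u"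
proof (induction rule: rtranclp_induct)
  case base then show ?case using x by simp
next
  case (step y z)
  then have yo: "y \<in> orbit p u" and r: "(inR p (S \<inter> orbit p u))\<^sup>*\<^sup>* x y" by auto
  have zo: "z \<in> orbit p u" using orbit_closed[OF yo] step(2) by (auto simp: inR_def)
  have "inR p (S \<inter> orbit p u) y z" using step(2) yo zo by (auto simp: inR_def)
  then show ?case using r zo by (meson rtranclp.rtrancl_into_rtrancl)
qed

definition giso :: "nat \<Rightarrow> ((nat \<Rightarrow> nat) \<Rightarrow> (nat \<Rightarrow> nat)) \<Rightarrow> (nat \<Rightarrow> nat) set \<Rightarrow> (nat \<Rightarrow> nat) set \<Rightarrow> bool" where
  "giso p f V W \<longleftrightarrow> bij_betw f V W \<and> (\<forall>x\<in>V. \<forall>y\<in>V. sadj p (f x) (f y) = sadj p x y)"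

lemma mult_sadj: "mult p x y \<noteq> 0 \<longleftrightarrow> sadj p x y"
proof -
  let ?M = "{(z, i). z \<in> {x, y} \<and> i \<in> {1..p} \<and> {z, gen i z} = {x, y}}"
  have fin: "finite ?M" by (rule finite_subset[of _ "{x,y} \<times> {1..p}"]) auto
  have "?M \<noteq> {} \<longleftrightarrow> sadj p x y"
  proof
    assume "?M \<noteq> {}"
    then obtain z i where zi: "z \<in> {x,y}" "i \<in> {1..p}" "{z, gen i z} = {x,y}" by auto
    have d: "y = gen i z \<and> z = x \<or> x = gen i z \<and> z = y" using zi(1,3) by (auto simp: doubleton_eq_iff)
    then show "sadj p x y" unfolding sadj_def using zi(2) by blast
  next
    assume "sadj p x y"
    then obtain i where i: "i \<in> {1..p}" "y = gen i x \<or> x = gen i y" by (auto simp: sadj_def)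
    from i(2) show "?M \<noteq> {}"
    proof
      assume "y = gen i x"
      then have "(x, i) \<in> ?M" using i(1) by auto
      then show ?thesis by blast
    next
      assume "x = gen i y"
      then have "(y, i) \<in> ?M" using i(1) by auto
      then show ?thesis by blast
    qed
  qed
  then show ?thesis using fin by (simp add: mult_def card_eq_0_iff)
qed

lemma iso_giso: "schreier_iso p u v \<Longrightarrow> \<exists>f. giso p f (orbit p u) (orbit p v)"
  unfolding schreier_iso_def giso_def using mult_sadj by metis

lemma giso_inv:
  assumes g: "giso p f V W" shows "giso p (inv_into V f) W V"
proof -
  have b: "bij_betw f V W" using g by (simp add: giso_def)
  have bi: "bij_betw (inv_into V f) W V" using bij_betw_inv_into[OF b] .
  have "sadj p (inv_into V f x) (inv_into V f y) = sadj p x y" if "x \<in> W" "y \<in> W" for x y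
  proof -
    have "inv_into V f x \<in> V" "inv_into V f y \<in> V" using bi that bij_betwE by blast+
    then have "sadj p (f (inv_into V f x)) (f (inv_into V f y)) = sadj p (inv_into V f x) (inv_into V f y)"
      using g by (simp add: giso_def)
    moreover have "f (inv_into V f x) = x" by (rule bij_betw_inv_into_right[OF b that(1)])
    moreover have "f (inv_into V f y) = y" by (rule bij_betw_inv_into_right[OF b that(2)])
    ultimately show ?thesis by simp
  qed
  then show ?thesis using bi by (simp add: giso_def)
qed

lemma reach_map:
  assumes g: "giso p f V W" and S: "S \<subseteq> V" and r: "reach_in p S x y"
  shows "reach_in p (f ` S) (f x) (f y)"
proof -
  have "(inR p S)\<^sup>*\<^sup>* x y" using r by (simp add: reach_inR)
  then have "(inR p (f ` S))\<^sup>*\<^sup>* (f x) (f y)"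
  proof (induction rule: rtranclp_induct)
    case base then show ?case by simp
  next
    case (step y z)
    then have "y \<in> S" "z \<in> S" "sadj p y z" by (auto simp: inR_def)
    then have "inR p (f ` S) (f y) (f z)" using g S by (auto simp: inR_def giso_def)
    then show ?case using step(3) by (meson rtranclp.rtrancl_into_rtrancl)
  qed
  then show ?thesis by (simp add: reach_inR)
qed

lemma comp_map:
  assumes g: "giso p f V W" and S: "S \<subseteq> V" and x: "x \<in> V"
  shows "f ` comp_in p S x = comp_in p (f ` S) (f x)"
proof
  show "f ` comp_in p S x \<subseteq> comp_in p (f ` S) (f x)"
    using reach_map[OF g S] by (auto simp: comp_in_def)
next
  show "comp_in p (f ` S) (f x) \<subseteq> f ` comp_in p S x"
  proof
    fix z assume z: "z \<in> comp_in p (f ` S) (f x)"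
    have b: "bij_betw f V W" using g by (simp add: giso_def)
    let ?g = "inv_into V f"
    have fS: "f ` S \<subseteq> W" using b S bij_betw_imp_surj_on by blast
    have fx: "f x \<in> W" using b x bij_betwE by blast
    have zW: "z \<in> W" using z comp_sub[of p "f ` S" "f x"] fS fx by auto
    have "reach_in p (?g ` f ` S) (?g (f x)) (?g z)"
      using reach_map[OF giso_inv[OF g] fS] z by (simp add: comp_in_def)
    moreover have "?g ` f ` S = S" using b S
      by (metis bij_betw_imp_inj_on image_inv_into_cancel inv_into_image_cancel)
    moreover have "?g (f x) = x" using b x by (meson bij_betw_inv_into_left)
    ultimately have "?g z \<in> comp_in p S x" by (simp add: comp_in_def)
    moreover have "f (?g z) = z" by (rule bij_betw_inv_into_right[OF b zW])
    ultimately show "z \<in> f ` comp_in p S x" by (metis image_eqI)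
  qed
qed

lemma seq_match:
  fixes A B :: "nat \<Rightarrow> nat"
  assumes A: "strict_mono A" and B: "strict_mono B"
    and h1: "\<forall>j\<ge>J. \<exists>m. A j = B m" and h2: "\<forall>m\<ge>J'. \<exists>j. B m = A j"
  shows "\<exists>l h. \<forall>n. A (l + n) = B (h + n)"
proof -
  define j0 where "j0 = J + B J'"
  have "J \<le> j0" by (simp add: j0_def)
  then obtain m0 where m0: "A j0 = B m0" using h1 by blast
  have "B J' \<le> B m0" using m0 strict_mono_imp_increasing[OF A, of j0] j0_def by simp
  then have m0J: "J' \<le> m0" using strict_mono_less_eq[OF B] by blast
  have "\<forall>n. A (j0 + n) = B (m0 + n)"
  proof
    fix n show "A (j0 + n) = B (m0 + n)"
    proof (induction n)
      case 0 then show ?case using m0 by simp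
    next
      case (Suc n)
      have "J \<le> j0 + Suc n" by (simp add: j0_def)
      then obtain m1 where m1: "A (j0 + Suc n) = B m1" using h1 by blast
      have "B (m0 + n) < B m1" using Suc.IH m1 strict_mono_less[OF A, of "j0 + n" "j0 + Suc n"] by simp
      then have lt: "m0 + n < m1" using strict_mono_less[OF B] by blast
      show ?case
      proof (rule ccontr)
        assume ne: "A (j0 + Suc n) \<noteq> B (m0 + Suc n)"
        then have "m1 \<noteq> m0 + Suc n" using m1 by auto
        then have lt2: "m0 + Suc n < m1" using lt by simp
        have "J' \<le> m0 + Suc n" using m0J by simp
        then obtain j2 where j2: "B (m0 + Suc n) = A j2" using h2 by blast
        have "A (j0 + n) < A j2" using Suc.IH j2 strict_mono_less[OF B, of "m0 + n" "m0 + Suc n"] by simp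
        then have "j0 + n < j2" using strict_mono_less[OF A] by blast
        moreover have "B (m0 + Suc n) < B m1" using lt2 strict_mono_less[OF B] by blast
        then have "A j2 < A (j0 + Suc n)" using j2 m1 by simp
        then have "j2 < j0 + Suc n" using strict_mono_less[OF A] by blast
        ultimately show False by simp
      qed
    qed
  qed
  then show ?thesis by blast
qed


locale dc =
  fixes p :: nat and u :: "nat \<Rightarrow> nat" and k :: nat and a :: "nat \<Rightarrow> nat" and us :: "nat \<Rightarrow> nat list"
  assumes dec: "decomp p u k a us" and X: "u \<in> Xinf p"
begin

abbreviation N where "N \<equiv> Npos k us"
abbreviation V where "V \<equiv> orbit p u"

lemma N_Suc: "N (Suc j) = N j + 1 + length (us (Suc j))"
  by (simp add: Npos_def)

lemma N_less: "N j < N (Suc j)" by (simp add: N_Suc)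

lemma N_mono: "strict_mono N" unfolding strict_mono_Suc_iff using N_less by blast

lemma N_ge: "j \<le> N j"
  using strict_mono_imp_increasing[OF N_mono] .

lemma N_le: "j \<le> j' \<Longrightarrow> N j \<le> N j'"
  using strict_mono_less_eq[OF N_mono] by blast

lemma u_le: "u i \<le> p" using X by (simp add: Xinf_def)

lemma a_props: "1 \<le> a (Suc j)" "a (Suc j) \<le> p" "a (Suc (Suc j)) \<noteq> a (Suc j)"
proof -
  have "\<forall>j\<ge>1. a j \<in> {1..p} \<and> a (Suc j) \<noteq> a j \<and> set (us j) \<subseteq> {0, a j}"
    using dec unfolding decomp_def by blast
  then have "a (Suc j) \<in> {1..p} \<and> a (Suc (Suc j)) \<noteq> a (Suc j)" by simp
  then show "1 \<le> a (Suc j)" "a (Suc j) \<le> p" "a (Suc (Suc j)) \<noteq> a (Suc j)" by auto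
qed

lemma us_set: "set (us (Suc j)) \<subseteq> {0, a (Suc j)}"
proof -
  have "\<forall>j\<ge>1. a j \<in> {1..p} \<and> a (Suc j) \<noteq> a j \<and> set (us j) \<subseteq> {0, a j}"
    using dec unfolding decomp_def by blast
  then show ?thesis by simp
qed

lemma u_N: "u (N j) = a (Suc j)"
proof -
  have "\<forall>j\<ge>1. u (Npos k us (j - 1)) = a j \<and>
        (\<forall>m<length (us j). u (Npos k us (j - 1) + 1 + m) = us j ! m)"
    using dec unfolding decomp_def by blast
  then show ?thesis by (metis diff_Suc_1 le_add1 plus_1_eq_Suc)
qed

lemma u_us: "m < length (us (Suc j)) \<Longrightarrow> u (N j + 1 + m) = us (Suc j) ! m"
proof -
  assume m: "m < length (us (Suc j))"
  have "\<forall>j\<ge>1. u (Npos k us (j - 1)) = a j \<and>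
        (\<forall>m<length (us j). u (Npos k us (j - 1) + 1 + m) = us j ! m)"
    using dec unfolding decomp_def by blast
  then have "\<forall>m<length (us (Suc j)). u (N j + 1 + m) = us (Suc j) ! m"
    by (metis diff_Suc_1 le_add1 plus_1_eq_Suc)
  then show ?thesis using m by blast
qed

lemma u_mid: "N j < i \<Longrightarrow> i < N (Suc j) \<Longrightarrow> u i = 0 \<or> u i = a (Suc j)"
proof -
  assume h: "N j < i" "i < N (Suc j)"
  define m where "m = i - N j - 1"
  have i: "i = N j + 1 + m" using h(1) by (simp add: m_def)
  have ml: "m < length (us (Suc j))" using h(2) i N_Suc[of j] by simp
  have "u i = us (Suc j) ! m" using u_us[OF ml] i by simp
  moreover have "us (Suc j) ! m \<in> set (us (Suc j))" using ml by simp
  ultimately show ?thesis using us_set[of j] by auto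
qed

lemma u_nz: "u (N j) \<noteq> 0" using u_N a_props(1)[of j] by simp

definition C :: "nat \<Rightarrow> (nat \<Rightarrow> nat)" where
  "C j = (\<lambda>i. if i < N (Suc j) then 0 else u i)"

definition Bj :: "nat \<Rightarrow> (nat \<Rightarrow> nat) set" where
  "Bj j = Bset p (N (Suc j)) (a (Suc j)) u"

lemma memB:
  assumes "\<forall>i<N (Suc j). w i \<le> p" "\<forall>i\<ge>N j. w i = u i"
  shows "w \<in> Bj j"
proof -
  have T: "\<forall>i\<ge>N (Suc j). w i = u i" using assms(2) N_less[of j] by simp
  have "LZ w (N (Suc j)) (a (Suc j))" unfolding LZ_def
  proof (rule exI[of _ "N j"], intro conjI allI impI)
    show "N j < N (Suc j)" by (rule N_less)
    show "w (N j) = a (Suc j)" using assms(2) u_N by simp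
    fix i assume "N j < i \<and> i < N (Suc j)"
    then show "w i = 0 \<or> w i = a (Suc j)" using u_mid assms(2) by simp
  qed
  then show ?thesis unfolding Bj_def Bset_def using T assms(1) by blast
qed

lemma u_B: "u \<in> Bj j" by (rule memB) (simp_all add: u_le)

lemma C_B: "j < j' \<Longrightarrow> C j \<in> Bj j'"
proof -
  assume jj: "j < j'"
  have "N (Suc j) \<le> N j'" using N_le jj by simp
  show ?thesis
  proof (rule memB)
    show "\<forall>i<N (Suc j'). C j i \<le> p" by (simp add: C_def u_le)
    show "\<forall>i\<ge>N j'. C j i = u i" using \<open>N (Suc j) \<le> N j'\<close> by (simp add: C_def)
  qed
qed

lemma C_notB: "C j \<notin> Bj j"
proof
  assume "C j \<in> Bj j"
  then have "LZ (C j) (N (Suc j)) (a (Suc j))" by (simp add: Bj_def Bset_def)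
  then obtain l where "l < N (Suc j)" "C j l = a (Suc j)" unfolding LZ_def by blast
  then show False using a_props(1)[of j] by (simp add: C_def)
qed

lemma C_inj: "inj C"
proof (rule injI)
  fix j j' assume e: "C j = C j'"
  show "j = j'"
  proof (rule ccontr)
    assume "j \<noteq> j'"
    then consider "j < j'" | "j' < j" by linarith
    then show False
    proof cases
      case 1
      have "N (Suc j) < N (Suc j')" using 1 strict_mono_less[OF N_mono] by simp
      then have "C j' (N (Suc j)) = 0" by (simp add: C_def)
      moreover have "C j (N (Suc j)) \<noteq> 0" using u_nz by (simp add: C_def)
      ultimately show False using e by simp
    next
      case 2
      have "N (Suc j') < N (Suc j)" using 2 strict_mono_less[OF N_mono] by simp
      then have "C j (N (Suc j')) = 0" by (simp add: C_def)
      moreover have "C j' (N (Suc j')) \<noteq> 0" using u_nz by (simp add: C_def)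
      ultimately show False using e by simp
    qed
  qed
qed

lemma B_conn: "w \<in> Bj j \<Longrightarrow> (inR p (Bj j))\<^sup>*\<^sup>* u w"
proof -
  assume w: "w \<in> Bj j"
  let ?n = "N (Suc j)" and ?a = "a (Suc j)"
  have a0: "?a \<noteq> 0" "?a \<le> p" using a_props[of j] by auto
  let ?r = "\<lambda>z. (\<lambda>i. if i = 0 then ?a else if i < ?n then 0 else z i)"
  have conn: "(inR p (Bj j))\<^sup>*\<^sup>* z (?r u)" if z: "z \<in> Bj j" for z
  proof -
    have zs: "\<forall>i\<ge>?n. z i = u i" "\<forall>i<?n. z i \<le> p" "LZ z ?n ?a" using z by (auto simp: Bj_def Bset_def)
    have eqB: "Bset p ?n ?a z = Bj j" using zs(1) by (auto simp: Bj_def Bset_def)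
    have eqr: "?r z = ?r u" using zs(1) by (auto simp: fun_eq_iff)
    show ?thesis using Q_conn[OF a0 zs(2) zs(3)] unfolding eqB eqr .
  qed
  show ?thesis using rtranclp_trans[OF conn[OF u_B] inR_sym[OF conn[OF w]]] .
qed

lemma u_V: "u \<in> V" by (simp add: orbit_def)

lemma B_V: "Bj j \<subseteq> V"
proof
  fix w assume "w \<in> Bj j"
  then show "w \<in> V" using inR_orbit[OF u_V B_conn] by blast
qed

lemma C_V: "C j \<in> V" using C_B[of j "Suc j"] B_V by auto

lemma C_eq: "C j = (\<lambda>q. if q < N (Suc j) then 0 else u q)" by (simp add: C_def)

lemma B_comp: "y \<in> Bj j \<Longrightarrow> comp_in p (V - {C j}) y = Bj j"
proof
  assume y: "y \<in> Bj j"
  show "Bj j \<subseteq> comp_in p (V - {C j}) y"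
  proof
    fix z assume z: "z \<in> Bj j"
    have "(inR p (Bj j))\<^sup>*\<^sup>* y z" using rtranclp_trans[OF inR_sym[OF B_conn[OF y]] B_conn[OF z]] .
    moreover have "Bj j \<subseteq> V - {C j}" using B_V C_notB by blast
    ultimately show "z \<in> comp_in p (V - {C j}) y" using inR_mono by (simp add: comp_in_def reach_inR)
  qed
next
  assume y: "y \<in> Bj j"
  show "comp_in p (V - {C j}) y \<subseteq> Bj j"
  proof
    fix z assume "z \<in> comp_in p (V - {C j}) y"
    then have "(inR p (V - {C j}))\<^sup>*\<^sup>* y z" by (simp add: comp_in_def reach_inR)
    then show "z \<in> Bj j"
    proof (induction rule: rtranclp_induct)
      case base then show ?case by (rule y)
    next
      case (step z z')
      have zz: "z' \<in> V - {C j}" "sadj p z z'" using step(2) by (auto simp: inR_def)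
      have tn: "u (N (Suc j)) \<noteq> 0" "u (N (Suc j)) \<noteq> a (Suc j)"
        using u_nz u_N a_props(3)[of j] by auto
      have "z \<in> Bset p (N (Suc j)) (a (Suc j)) u" using step(3) by (simp add: Bj_def)
      from Bset_closed[OF this _ tn zz(2)] a_props(1)[of j]
      have "z' \<in> Bj j \<or> z' = C j" by (simp add: Bj_def C_eq)
      then show ?case using zz(1) by blast
    qed
  qed
qed

lemma B_card: "finite (Bj j) \<and> card (Bj j) = (\<Sum>l<N (Suc j). (p+1)^l)"
  unfolding Bj_def using Bset_card a_props[of j] by simp

end


lemma sadj_gen: "1 \<le> i \<Longrightarrow> i \<le> p \<Longrightarrow> sadj p x (gen i x)"
  unfolding sadj_def by auto

lemma sadj_gen': "1 \<le> i \<Longrightarrow> i \<le> p \<Longrightarrow> sadj p (gen i x) x"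
  unfolding sadj_def by auto

context dc
begin

lemma u_nonconst: "\<exists>i\<ge>M. u i \<noteq> c"
proof (cases "u (N M) = c")
  case False then show ?thesis using N_ge[of M] by blast
next
  case True
  have "u (N (Suc M)) \<noteq> c" using True u_N a_props(3)[of M] by simp
  moreover have "M \<le> N (Suc M)" using N_ge[of "Suc M"] by simp
  ultimately show ?thesis by blast
qed

lemma u_has_nz: "\<exists>q\<ge>M. u q \<noteq> 0"
  using u_nonconst by blast

lemma V_G: "w \<in> V \<Longrightarrow> (\<forall>i. w i \<le> p) \<and> (\<exists>M. \<forall>i\<ge>M. w i = u i)"
proof -
  assume "w \<in> V"
  then have "(sadj p)\<^sup>*\<^sup>* u w" by (simp add: orbit_def)
  then show ?thesis
  proof (induction rule: rtranclp_induct)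
    case base then show ?case using u_le by blast
  next
    case (step x y)
    from step(3) obtain M where M: "\<forall>i\<ge>M. x i = u i" and L: "\<forall>i. x i \<le> p" by blast
    from step(2) obtain i where i: "1 \<le> i" "i \<le> p" and d: "y = gen i x \<or> x = gen i y"
      unfolding sadj_def by auto
    from d show ?case
    proof
      assume y: "y = gen i x"
      have Ly: "\<forall>q. y q \<le> p" using L i(2) gen_le y by blast
      obtain q where q: "q \<ge> M" "u q \<noteq> 0" using u_has_nz by blast
      have "x q \<noteq> 0" using M q by simp
      then have "\<forall>r\<ge>Suc (max M q). y r = u r" using gen_unch[of q _ x i] M y by auto
      then show ?case using Ly by blast
    next
      assume x: "x = gen i y"
      have Ly: "\<forall>q. y q \<le> p" using L i(2) gen_le_inv x by metis
      show ?case
      proof (cases "\<exists>q. y q \<noteq> 0")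
        case True
        then obtain q where q: "y q \<noteq> 0" by blast
        have "\<forall>r\<ge>Suc (max M q). y r = u r"
        proof (intro allI impI)
          fix r assume r: "Suc (max M q) \<le> r"
          then have "x r = y r" using gen_unch[of q r y i] q x by simp
          then show "y r = u r" using M r by simp
        qed
        then show ?thesis using Ly by blast
      next
        case False
        then have "\<forall>r. x r = i" using x gen_pre[of _ y i] by simp
        then have "\<forall>r\<ge>M. u r = i" using M by simp
        then show ?thesis using u_nonconst[of M i] by blast
      qed
    qed
  qed
qed

lemma eventually_B: "w \<in> V \<Longrightarrow> \<exists>J. \<forall>j\<ge>J. w \<in> Bj j"
proof -
  assume "w \<in> V"
  then obtain M where M: "\<forall>i\<ge>M. w i = u i" and L: "\<forall>i. w i \<le> p" using V_G by blast
  have "\<forall>j\<ge>M. w \<in> Bj j"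
  proof (intro allI impI)
    fix j assume "M \<le> j"
    then have "M \<le> N j" using N_ge[of j] by simp
    then show "w \<in> Bj j" using M L by (intro memB) auto
  qed
  then show ?thesis by blast
qed

lemma avoid_reach:
  assumes x: "x \<in> V" and r: "(inR p (- {c}))\<^sup>*\<^sup>* x y"
  shows "reach_in p (V - {c}) x y"
proof -
  have "(inR p (- {c} \<inter> V))\<^sup>*\<^sup>* x y" using inR_orbit[OF x r] by blast
  moreover have "- {c} \<inter> V = V - {c}" by blast
  ultimately show ?thesis by (simp add: reach_inR)
qed

lemma saturation:
  assumes c1: "c \<noteq> C j" and c2: "c \<noteq> C (Suc j)"
  shows "reach_in p (V - {c}) (C j) (C (Suc j))"
proof -
  let ?n = "N (Suc (Suc j))" and ?b = "a (Suc (Suc j))"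
  let ?W = "Wf ?n ?b u"
  define M where "M = (2::nat)^?n - 1"
  have b0: "?b \<noteq> 0" "1 \<le> ?b" "?b \<le> p" using a_props[of "Suc j"] by auto
  have ltn: "N (Suc j) < ?n" by (rule N_less)
  have pre: "\<forall>i<?n. C j i = 0 \<or> C j i = ?b"
  proof (intro allI impI)
    fix i assume i: "i < ?n"
    show "C j i = 0 \<or> C j i = ?b"
    proof (cases "i < N (Suc j)")
      case True then show ?thesis by (simp add: C_def)
    next
      case False
      show ?thesis
      proof (cases "i = N (Suc j)")
        case True then show ?thesis using u_N by (simp add: C_def)
      next
        case False
        then have "N (Suc j) < i" using \<open>\<not> i < N (Suc j)\<close> by simp
        then show ?thesis using u_mid[of "Suc j" i] i by (simp add: C_def)
      qed
    qed
  qed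
  have tl: "\<forall>i\<ge>?n. C j i = u i" using ltn by (simp add: C_def)
  obtain V0 where V0: "V0 < 2^?n" "C j = ?W V0" using W_surj[OF pre tl] by blast
  have top: "C (Suc j) = ?W M" unfolding M_def W_top C_def by simp
  have Mlt: "M < 2^?n" unfolding M_def by simp
  have V0M: "V0 \<le> M" using V0(1) unfolding M_def by simp
  have V0neM: "V0 \<noteq> M"
  proof
    assume "V0 = M"
    then have "C j = C (Suc j)" using V0(2) top by simp
    then show False using C_inj by (simp add: inj_eq)
  qed
  have tn: "u ?n \<noteq> 0" "u ?n \<noteq> ?b" using u_nz u_N a_props(3)[of "Suc j"] by auto
  have Cj_V: "C j \<in> V" by (rule C_V)
  have edge: "(inR p (- {c}))\<^sup>*\<^sup>* (?W v) (?W (v+1))" "(inR p (- {c}))\<^sup>*\<^sup>* (?W (v+1)) (?W v)"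
    if "v + 1 < 2^?n" "?W v \<noteq> c" "?W (v+1) \<noteq> c" for v
  proof -
    have g: "gen ?b (?W v) = ?W (v+1)" using W_succ[OF b0(1) that(1)] .
    have "inR p (- {c}) (?W v) (?W (v+1))"
      unfolding inR_def using that(2,3) sadj_gen[OF b0(2,3), of "?W v"] g by simp
    then show "(inR p (- {c}))\<^sup>*\<^sup>* (?W v) (?W (v+1))" by blast
    have "inR p (- {c}) (?W (v+1)) (?W v)"
      unfolding inR_def using that(2,3) sadj_gen'[OF b0(2,3), of "?W v"] g by simp
    then show "(inR p (- {c}))\<^sup>*\<^sup>* (?W (v+1)) (?W v)" by blast
  qed
  show ?thesis
  proof (cases "\<exists>v. V0 \<le> v \<and> v \<le> M \<and> ?W v = c")
    case True
    then obtain v where v: "V0 \<le> v" "v \<le> M" "?W v = c" by blast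
    have notlow: "?W v' \<noteq> c" if "v' \<le> V0" for v'
    proof
      assume "?W v' = c"
      then have "?W v' = ?W v" using v(3) by simp
      then have "v' = v" using W_inj[of v' ?n v ?b u] that V0(1) v(2) Mlt b0(1) by simp
      then have "v = V0" using that v(1) by simp
      then show False using v(3) V0(2) c1 by simp
    qed
    have down: "(inR p (- {c}))\<^sup>*\<^sup>* (?W V0) (?W (V0 - d))" if "d \<le> V0" for d
      using that
    proof (induction d)
      case 0 then show ?case by simp
    next
      case (Suc d)
      have e: "V0 - Suc d + 1 = V0 - d" using Suc.prems by simp
      have "(inR p (- {c}))\<^sup>*\<^sup>* (?W (V0 - Suc d + 1)) (?W (V0 - Suc d))"
        using edge(2)[of "V0 - Suc d"] notlow V0(1) e by simp
      then have "(inR p (- {c}))\<^sup>*\<^sup>* (?W (V0 - d)) (?W (V0 - Suc d))" using e by simp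
      then show ?case using Suc.IH Suc.prems by (meson Suc_leD rtranclp_trans)
    qed
    have d0: "(inR p (- {c}))\<^sup>*\<^sup>* (?W V0) (?W 0)" using down[of V0] by simp
    have wrap: "gen ?b (?W M) = ?W 0" unfolding M_def using W_wrap[of u ?n ?b, OF tn] .
    have "?W M \<noteq> c" using c2 top by simp
    moreover have "?W 0 \<noteq> c" using notlow by simp
    ultimately have "inR p (- {c}) (?W 0) (?W M)"
      unfolding inR_def using sadj_gen'[OF b0(2,3), of "?W M"] wrap by simp
    then have "(inR p (- {c}))\<^sup>*\<^sup>* (?W V0) (?W M)" using d0 by (meson rtranclp.rtrancl_into_rtrancl)
    then show ?thesis using avoid_reach Cj_V V0(2) top by simp
  next
    case False
    have up: "(inR p (- {c}))\<^sup>*\<^sup>* (?W V0) (?W (V0 + d))" if "V0 + d \<le> M" for d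
      using that
    proof (induction d)
      case 0 then show ?case by simp
    next
      case (Suc d)
      have "V0 + d + 1 < 2^?n" using Suc.prems Mlt by simp
      moreover have "?W (V0 + d) \<noteq> c" using False Suc.prems by simp
      moreover have "?W (V0 + d + 1) \<noteq> c" using False Suc.prems by simp
      ultimately have "(inR p (- {c}))\<^sup>*\<^sup>* (?W (V0 + d)) (?W (V0 + d + 1))" using edge(1) by blast
      then show ?case using Suc.IH Suc.prems by (simp add: rtranclp_trans)
    qed
    have "(inR p (- {c}))\<^sup>*\<^sup>* (?W V0) (?W M)" using up[of "M - V0"] V0M by simp
    then show ?thesis using avoid_reach Cj_V V0(2) top by simp
  qed
qed

end


context dc
begin

lemma Lstar:
  assumes x: "x \<in> V" "x \<noteq> c" and fin: "finite (comp_in p (V - {c}) x)"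
    and cm: "C m0 \<in> comp_in p (V - {c}) x"
  shows "\<exists>m'>m0. comp_in p (V - {c}) x = Bj m'"
proof -
  let ?D = "comp_in p (V - {c}) x"
  have ex: "\<exists>m'>m0. c = C m'"
  proof (rule ccontr)
    assume ne: "\<not> (\<exists>m'>m0. c = C m')"
    have all: "C (m0 + d) \<in> ?D" for d
    proof (induction d)
      case 0 then show ?case using cm by simp
    next
      case (Suc d)
      have "C (m0 + d) \<in> insert x (V - {c})" using Suc.IH comp_sub by blast
      then have n1: "c \<noteq> C (m0 + d)" using x(2) by auto
      have n2: "c \<noteq> C (Suc (m0 + d))" using ne by simp
      have r2: "reach_in p (V - {c}) (C (m0 + d)) (C (Suc (m0 + d)))" using saturation n1 n2 by blast
      have r1: "reach_in p (V - {c}) x (C (m0 + d))" using Suc.IH by (simp add: comp_in_def)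
      have "reach_in p (V - {c}) x (C (Suc (m0 + d)))" by (rule reach_trans[OF r1 r2])
      then show ?case by (simp add: comp_in_def)
    qed
    have rs: "range (\<lambda>d. C (m0 + d)) \<subseteq> ?D" using all by blast
    have ij: "inj (\<lambda>d. C (m0 + d))"
    proof (rule injI)
      fix d d' assume "C (m0 + d) = C (m0 + d')"
      then have "m0 + d = m0 + d'" by (rule injD[OF C_inj])
      then show "d = d'" by simp
    qed
    have "finite (range (\<lambda>d. C (m0 + d)))" by (rule finite_subset[OF rs fin])
    then have "finite (UNIV :: nat set)" using finite_imageD[OF _ ij] by blast
    then show False by simp
  qed
  then obtain m' where m': "m' > m0" "c = C m'" by blast
  have "reach_in p (V - {c}) x (C m0)" using cm by (simp add: comp_in_def)
  then have "?D = comp_in p (V - {c}) (C m0)" by (rule comp_eq)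
  also have "\<dots> = Bj m'" using B_comp[OF C_B[OF m'(1)]] m'(2) by simp
  finally show ?thesis using m'(1) by blast
qed

end

lemma giso_bij: "giso p f V W \<Longrightarrow> bij_betw f V W" by (simp add: giso_def)

lemma half:
  assumes U: "dc p u k a us" and Vv: "dc p v k' a' us'" and g: "giso p f (orbit p u) (orbit p v)"
  shows "\<exists>J. \<forall>j\<ge>J. \<exists>m. Npos k us (Suc j) = Npos k' us' (Suc m)"
proof -
  interpret U: dc p u k a us by (rule U)
  interpret W: dc p v k' a' us' by (rule Vv)
  have b: "bij_betw f (orbit p u) (orbit p v)" using g by (simp add: giso_def)
  have inj: "inj_on f (orbit p u)" using b by (simp add: bij_betw_def)
  have c1: "W.C 0 \<in> orbit p v" by (rule W.C_V)
  define g0 where "g0 = inv_into (orbit p u) f (W.C 0)"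
  have g0V: "g0 \<in> orbit p u" unfolding g0_def using bij_betw_inv_into[OF b] c1 bij_betwE by blast
  have fg0: "f g0 = W.C 0" unfolding g0_def by (rule bij_betw_inv_into_right[OF b c1])
  obtain J where J: "\<forall>j\<ge>J. g0 \<in> U.Bj j" using U.eventually_B[OF g0V] by blast
  have "\<exists>m. Npos k us (Suc j) = Npos k' us' (Suc m)" if jJ: "J \<le> j" for j
  proof -
    let ?D = "U.Bj j"
    have D: "comp_in p (orbit p u - {U.C j}) u = ?D" using U.B_comp[OF U.u_B] .
    have CjV: "U.C j \<in> orbit p u" by (rule U.C_V)
    have uV: "u \<in> orbit p u" by (rule U.u_V)
    have sub: "orbit p u - {U.C j} \<subseteq> orbit p u" by blast
    have img: "f ` (orbit p u - {U.C j}) = orbit p v - {f (U.C j)}"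
    proof -
      have "f ` (orbit p u - {U.C j}) = f ` orbit p u - f ` {U.C j}"
        using inj CjV by (simp add: inj_on_image_set_diff)
      then show ?thesis using b by (simp add: bij_betw_def)
    qed
    have fD: "f ` ?D = comp_in p (orbit p v - {f (U.C j)}) (f u)"
      using comp_map[OF g sub uV] D img by simp
    have finD: "finite ?D" "card ?D = (\<Sum>l<Npos k us (Suc j). (p+1)^l)" using U.B_card by auto
    have injD: "inj_on f ?D" using inj U.B_V inj_on_subset by blast
    have finfD: "finite (f ` ?D)" using finD by simp
    have cardfD: "card (f ` ?D) = card ?D" using card_image[OF injD] .
    have "W.C 0 \<in> f ` ?D" using J jJ fg0 by (metis image_eqI)
    have fuV: "f u \<in> orbit p v" using b uV bij_betwE by blast
    have "u \<noteq> U.C j" using U.u_B U.C_notB by metis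
    then have fne: "f u \<noteq> f (U.C j)" using inj uV CjV by (meson inj_on_eq_iff)
    have fin2: "finite (comp_in p (orbit p v - {f (U.C j)}) (f u))" using finfD fD by simp
    have c02: "W.C 0 \<in> comp_in p (orbit p v - {f (U.C j)}) (f u)" using \<open>W.C 0 \<in> f ` ?D\<close> fD by simp
    obtain m' where m': "m' > 0" "comp_in p (orbit p v - {f (U.C j)}) (f u) = W.Bj m'"
      using W.Lstar[OF fuV fne fin2 c02] by blast
    have "card (W.Bj m') = (\<Sum>l<Npos k' us' (Suc m'). (p+1)^l)" using W.B_card by auto
    then have "(\<Sum>l<Npos k us (Suc j). (p+1::nat)^l) = (\<Sum>l<Npos k' us' (Suc m'). (p+1)^l)"
      using cardfD finD fD m'(2) by simp
    then have "Npos k us (Suc j) = Npos k' us' (Suc m')"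
      using strict_mono_eq[OF bsum_mono] by blast
    then show ?thesis by blast
  qed
  then show ?thesis by blast
qed

theorem lemma4p19:
  fixes p :: nat and u v :: "nat \<Rightarrow> nat"
    and k k' :: nat and a a' :: "nat \<Rightarrow> nat" and us us' :: "nat \<Rightarrow> nat list"
  assumes "p \<ge> 1"
    and "u \<in> E1 p" and "v \<in> E1 p"
    and "schreier_iso p u v"
    and "decomp p u k a us" and "decomp p v k' a' us'"
  shows "compatible (Lseq k us) (Lseq k' us')"
proof -
  have U: "dc p u k a us" using assms(2,5) by (simp add: dc_def E1_def)
  have Vv: "dc p v k' a' us'" using assms(3,6) by (simp add: dc_def E1_def)
  obtain f where g: "giso p f (orbit p u) (orbit p v)" using iso_giso[OF assms(4)] by blast
  have g': "giso p (inv_into (orbit p u) f) (orbit p v) (orbit p u)" by (rule giso_inv[OF g])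
  obtain J where J: "\<forall>j\<ge>J. \<exists>m. Npos k us (Suc j) = Npos k' us' (Suc m)" using half[OF U Vv g] by blast
  obtain J' where J': "\<forall>m\<ge>J'. \<exists>j. Npos k' us' (Suc m) = Npos k us (Suc j)" using half[OF Vv U g'] by blast
  interpret U: dc p u k a us by (rule U)
  interpret W: dc p v k' a' us' by (rule Vv)
  have m1: "strict_mono (\<lambda>j. Npos k us (Suc j))" using U.N_mono by (simp add: strict_mono_def)
  have m2: "strict_mono (\<lambda>j. Npos k' us' (Suc j))" using W.N_mono by (simp add: strict_mono_def)
  obtain l h where lh: "\<forall>n. Npos k us (Suc (l + n)) = Npos k' us' (Suc (h + n))"
    using seq_match[OF m1 m2 J J'] by blast
  show ?thesis unfolding compatible_def Lseq_def using lh by auto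
qed


end
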